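(* Let $w=(w_\sigma)_{\sigma\in\mathscr{I}}$ index an Ekedahl–Oort stratum $M_w$, let $x\in M_w(k)$ be a geometric point, and let $\{\tau,\bar\tau\}\in\mathscr{I}^+$ with $\tau=i\in\mathscr{I}_\mathfrak{P}$, writing $\mathfrak{f}(i)=r_\tau$ and $\mathfrak{f}(i-1)=r_{\phi^{-1}\circ\tau}$. Then $r_V\{\tau,\bar\tau\}(x)=r_V^{\rm ord}\{\tau,\bar\tau\}$ if and only if: (a) in case $\mathfrak{f}(i-1)\le\mathfrak{f}(i)$: $\#\{j:\ j\le d-\mathfrak{f}(i-1),\ w_i(j)\le\mathfrak{f}(i)\}=\mathfrak{f}(i)-\mathfrak{f}(i-1)$; (b) in case $\mathfrak{f}(i)\le\mathfrak{f}(i-1)$: $\#\{j:\ d-\mathfrak{f}(i-1)+1\le j,\ \mathfrak{f}(i)+1\le w_i(j)\}=\mathfrak{f}(i-1)-\mathfrak{f}(i)$. (When $\mathfrak{f}(i-1)=\mathfrak{f}(i)$ both conditions are equivalent.)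
   Context: Notation for unitary Shimura varieties: $K$ CM of degree $2g$, $\mathscr{I}=\mathrm{Hom}(\mathcal{O}_K,\kappa)$ (via a fixed embedding), $\bar\tau=\tau\circ\rho$, $\mathscr{I}^+$ the pairs $\{\tau,\bar\tau\}$, signature $(r_\tau)$ with $r_\tau+r_{\bar\tau}=d$. For a prime $\mathfrak{P}\mid p$ of $K$, $\mathscr{I}_\mathfrak{P}$ are the embeddings factoring through $\mathcal{O}_K/\mathfrak{P}$; Frobenius permutes $\mathscr{I}_\mathfrak{P}$ cyclically, and when $\tau$ is written $i$, $\phi\circ\tau$ is written $i+1$ and $\phi^{-1}\circ\tau$ is written $i-1$; $\mathfrak{f}(i)=r_i$. $M$ is the special fiber over $\kappa$ of the PEL unitary moduli space; $\mathcal{P}_\tau=\underline\omega[\tau]$, $V:\mathcal{P}_\tau\to\Phi^*_M\mathcal{P}_{\phi^{-1}\circ\tau}$ induced by Verschiebung; $r_V\{\tau,\bar\tau\}(x)=\dim\ker(V\otimes V)$ on $(\mathcal{P}_\tau\otimes\mathcal{P}_{\bar\tau})_x$, and $r_V^{\rm ord}\{\tau,\bar\tau\}=\max\{0,r_\tau-r_{\phi^{-1}\circ\tau}\}(d-r_\tau)+r_\tau\max\{0,r_{\phi^{-1}\circ\tau}-r_\tau\}$. An $(e,d-e)$-shuffle is a permutation $\pi$ of $\{1,\dots,d\}$ with $\pi^{-1}(1)<\dots<\pi^{-1}(e)$ and $\pi^{-1}(e+1)<\dots<\pi^{-1}(d)$; $\Pi_{e,d-e}$ is the set of these; $w_0(\nu)=d+1-\nu$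 and $\check\pi=w_0\pi w_0$. By Moonen, EO strata $M_w$ of $M$ correspond bijectively to tuples $w=(w_\sigma)_{\sigma\in\mathscr{I}}$ with $w_\sigma\in\Pi_{r_\sigma,d-r_\sigma}$ and $w_{\bar\sigma}=\check w_\sigma$, such that for geometric $x\in M_w(k)$ the Dieudonné module of $A_x[p]$ is isomorphic (with $\mathcal{O}_K$-action) to $N_w=\bigoplus_{i\in\mathscr{I}}\bigoplus_{j=1}^dke_{i,j}$ ($\mathcal{O}_K$ acting on the $i$-summand via $i$) with $F(e_{i,j})=0$ if $w_i(j)\le\mathfrak{f}(i)$, $F(e_{i,j})=e_{i+1,m}$ if $w_i(j)=\mathfrak{f}(i)+m$; $V(e_{i+1,j})=0$ if $j\le d-\mathfrak{f}(i)$, $V(e_{i+1,j})=e_{i,n}$ if $j=d-\mathfrak{f}(i)+w_i(n)$ ($F$ $\phi$-semilinear, $V$ $\phi^{-1}$-semilinear); and $\dim M_w=\sum_{\{\sigma,\bar\sigma\}\in\mathscr{I}^+}\ell(w_\sigma)$, $\ell$ the length in $\mathfrak{S}_d$. The fiber $\mathcal{P}_{\tau,x}$ is identified with the $\tau$-part of $N_w[F]$. *)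

theory Defs
  imports Main "HOL-Library.Function_Algebras" "HOL-Combinatorics.Permutations" "HOL-Computational_Algebra.Polynomial"
begin

(* Basis indices of the Dieudonne module N_w: pairs (embedding, j) with 1 <= j <= d. *)

(* w_0(nu) = d+1-nu and check pi = w_0 pi w_0 (identity outside {1..d}). *)
definition check_perm :: "nat \<Rightarrow> (nat \<Rightarrow> nat) \<Rightarrow> nat \<Rightarrow> nat" where
  "check_perm d \<pi> \<nu> = (if \<nu> \<in> {1..d} then d + 1 - \<pi> (d + 1 - \<nu>) else \<nu>)"

definition shuffles :: "nat \<Rightarrow> nat \<Rightarrow> (nat \<Rightarrow> nat) set" where
  "shuffles e d = {\<pi>. \<pi> permutes {1..d} \<and>
     (\<forall>a b. 1 \<le> a \<and> a < b \<and> b \<le> e \<longrightarrow> inv \<pi> a < inv \<pi> b) \<and>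
     (\<forall>a b. e + 1 \<le> a \<and> a < b \<and> b \<le> d \<longrightarrow> inv \<pi> a < inv \<pi> b)}"

definition F_basis :: "('e \<Rightarrow> 'e) \<Rightarrow> ('e \<Rightarrow> nat) \<Rightarrow> ('e \<Rightarrow> nat \<Rightarrow> nat)
    \<Rightarrow> 'e \<times> nat \<Rightarrow> ('e \<times> nat) option" where
  "F_basis fr f w a = (let t = fst a; j = snd a in
     if w t j \<le> f t then None else Some (fr t, w t j - f t))"

definition V_basis :: "nat \<Rightarrow> ('e \<Rightarrow> 'e) \<Rightarrow> ('e \<Rightarrow> nat) \<Rightarrow> ('e \<Rightarrow> nat \<Rightarrow> nat)
    \<Rightarrow> 'e \<times> nat \<Rightarrow> ('e \<times> nat) option" where
  "V_basis d fr f w a = (let s = inv fr (fst a); j = snd a in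
     if j \<le> d - f s then None
     else Some (s, THE n. n \<in> {1..d} \<and> j = d - f s + w s n))"

(* Vectors of N_w are functions on the basis indices supported on UNIV x {1..d}.
   Semilinear extension of a partial map on basis indices, w.r.t. sigma. *)
definition semilin_ext :: "('k \<Rightarrow> 'k) \<Rightarrow> ('e \<times> nat) set \<Rightarrow> ('e \<times> nat \<Rightarrow> ('e \<times> nat) option)
    \<Rightarrow> ('e \<times> nat \<Rightarrow> 'k::field) \<Rightarrow> ('e \<times> nat \<Rightarrow> 'k)" where
  "semilin_ext \<sigma> B g v = (\<lambda>b. \<Sum>a\<in>{a\<in>B. g a = Some b}. \<sigma> (v a))"

definition basis_idx :: "nat \<Rightarrow> ('e::finite \<times> nat) set" where
  "basis_idx d = UNIV \<times> {1..d}"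

definition frob :: "nat \<Rightarrow> 'k::field \<Rightarrow> 'k" where "frob p x = x ^ p"
definition frob_inv :: "nat \<Rightarrow> 'k::field \<Rightarrow> 'k" where "frob_inv p = inv (frob p)"

definition F_map where
  "F_map p d fr f w = semilin_ext (frob p) (basis_idx d) (F_basis fr f w)"
definition V_map where
  "V_map p d fr f w = semilin_ext (frob_inv p) (basis_idx d) (V_basis d fr f w)"

definition P_space :: "nat \<Rightarrow> nat \<Rightarrow> ('e::finite \<Rightarrow> 'e) \<Rightarrow> ('e \<Rightarrow> nat) \<Rightarrow> ('e \<Rightarrow> nat \<Rightarrow> nat)
    \<Rightarrow> 'e \<Rightarrow> ('e \<times> nat \<Rightarrow> 'k::field) set" where
  "P_space p d fr f w \<tau> = {v. (\<forall>a. a \<notin> {\<tau>} \<times> {1..d} \<longrightarrow> v a = 0) \<and> F_map p d fr f w v = (\<lambda>_. 0)}"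

definition cscale :: "'k::field \<Rightarrow> ('b \<Rightarrow> 'k) \<Rightarrow> ('b \<Rightarrow> 'k)" where
  "cscale c v = (\<lambda>x. c * v x)"

definition tens :: "('b \<Rightarrow> 'k::field) \<Rightarrow> ('b \<Rightarrow> 'k) \<Rightarrow> ('b \<times> 'b \<Rightarrow> 'k)" where
  "tens u v = (\<lambda>(a, b). u a * v b)"

definition P_tensor where
  "P_tensor p d fr f w \<tau> \<tau>' =
     module.span cscale {tens u v | u v. u \<in> P_space p d fr f w \<tau> \<and> v \<in> P_space p d fr f w \<tau>'}"

definition VV_map :: "nat \<Rightarrow> nat \<Rightarrow> ('e::finite \<Rightarrow> 'e) \<Rightarrow> ('e \<Rightarrow> nat) \<Rightarrow> ('e \<Rightarrow> nat \<Rightarrow> nat)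
    \<Rightarrow> (('e \<times> nat) \<times> ('e \<times> nat) \<Rightarrow> 'k::field) \<Rightarrow> (('e \<times> nat) \<times> ('e \<times> nat) \<Rightarrow> 'k)" where
  "VV_map p d fr f w t = (\<lambda>(b1, b2). \<Sum>(a1, a2)\<in>{(a1, a2). a1 \<in> basis_idx d \<and> a2 \<in> basis_idx d \<and>
        V_basis d fr f w a1 = Some b1 \<and> V_basis d fr f w a2 = Some b2}. frob_inv p (t (a1, a2)))"

definition r_V :: "'k::field itself \<Rightarrow> nat \<Rightarrow> nat \<Rightarrow> ('e::finite \<Rightarrow> 'e) \<Rightarrow> ('e \<Rightarrow> nat)
    \<Rightarrow> ('e \<Rightarrow> nat \<Rightarrow> nat) \<Rightarrow> 'e \<Rightarrow> 'e \<Rightarrow> nat" where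
  "r_V _ p d fr f w \<tau> \<tau>' =
     vector_space.dim (cscale :: 'k \<Rightarrow> _)
       {t \<in> P_tensor p d fr f w \<tau> \<tau>'. VV_map p d fr f w t = (\<lambda>_. 0)}"

definition r_V_ord :: "nat \<Rightarrow> nat \<Rightarrow> nat \<Rightarrow> int" where
  "r_V_ord d r r' = max 0 (int r - int r') * (int d - int r) + int r * max 0 (int r' - int r)"

end

theory Submission
  imports Defs
begin

lemma fun_sum_apply: "(sum g A) y = (\<Sum>a\<in>A. g a y)" for g :: "'a \<Rightarrow> 'b \<Rightarrow> 'c::comm_monoid_add"
  by (induct A rule: infinite_finite_induct) auto

lemma vs_cscale: "vector_space (cscale :: 'k::field \<Rightarrow> ('b \<Rightarrow> 'k) \<Rightarrow> ('b \<Rightarrow> 'k))"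
  by unfold_locales (auto simp: cscale_def algebra_simps)

definition unitv :: "'b \<Rightarrow> 'b \<Rightarrow> 'k::field" where "unitv x = (\<lambda>y. if y = x then 1 else 0)"
definition Zs :: "'b set \<Rightarrow> ('b \<Rightarrow> 'k::field) set" where "Zs X = {v. \<forall>x. x \<notin> X \<longrightarrow> v x = 0}"

lemma mod_cscale: "module (cscale :: 'k::field \<Rightarrow> ('b \<Rightarrow> 'k) \<Rightarrow> ('b \<Rightarrow> 'k))"
  using vs_cscale module_iff_vector_space by blast

lemma Zs_subspace: "module.subspace (cscale :: 'k::field \<Rightarrow> ('b \<Rightarrow> 'k) \<Rightarrow> ('b \<Rightarrow> 'k)) (Zs X)"
  unfolding module.subspace_def[OF mod_cscale] Zs_def cscale_def by auto

lemma Zs_span: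
  assumes "finite X"
  shows "module.span (cscale :: 'k::field \<Rightarrow> ('b \<Rightarrow> 'k) \<Rightarrow> ('b \<Rightarrow> 'k)) (unitv ` X) = Zs X"
proof -
  interpret vector_space "cscale :: 'k::field \<Rightarrow> ('b \<Rightarrow> 'k) \<Rightarrow> ('b \<Rightarrow> 'k)" by (rule vs_cscale)
  show ?thesis
  proof
    show "span (unitv ` X) \<subseteq> Zs X"
      by (rule span_minimal[OF _ Zs_subspace]) (auto simp: Zs_def unitv_def)
    show "Zs X \<subseteq> span (unitv ` X)"
    proof
      fix v :: "'b \<Rightarrow> 'k" assume v: "v \<in> Zs X"
      have "v = (\<Sum>x\<in>X. cscale (v x) (unitv x))"
      proof
        fix y
        have "(\<Sum>x\<in>X. cscale (v x) (unitv x)) y = (\<Sum>x\<in>X. if x = y then v y else 0)"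
          unfolding fun_sum_apply cscale_def unitv_def by (intro sum.cong) auto
        also have "\<dots> = v y" using v assms by (auto simp: Zs_def sum.delta')
        finally show "v y = (\<Sum>x\<in>X. cscale (v x) (unitv x)) y" by simp
      qed
      also have "\<dots> \<in> span (unitv ` X)"
        by (intro span_sum span_scale span_base) auto
      finally show "v \<in> span (unitv ` X)" .
    qed
  qed
qed

lemma unitv_inj: "inj (unitv :: 'b \<Rightarrow> 'b \<Rightarrow> 'k::field)"
  by (rule injI) (metis unitv_def one_neq_zero)

lemma unitv_indep:
  assumes "finite X"
  shows "\<not> module.dependent (cscale :: 'k::field \<Rightarrow> ('b \<Rightarrow> 'k) \<Rightarrow> ('b \<Rightarrow> 'k)) (unitv ` X)"
proof -
  interpret vector_space "cscale :: 'k::field \<Rightarrow> ('b \<Rightarrow> 'k) \<Rightarrow> ('b \<Rightarrow> 'k)" by (rule vs_cscale)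
  show ?thesis
  proof
    assume "dependent (unitv ` X)"
    then have "\<exists>u. (\<exists>v\<in>unitv ` X. u v \<noteq> 0) \<and> (\<Sum>v\<in>unitv ` X. cscale (u v :: 'k) v) = 0"
      using dependent_finite[of "unitv ` X"] assms by simp
    then obtain u where u: "\<exists>v\<in>unitv ` X. u v \<noteq> 0" "(\<Sum>v\<in>unitv ` X. cscale (u v :: 'k) v) = 0"
      by blast
    then obtain x where x: "x \<in> X" "u (unitv x) \<noteq> 0" by auto
    have "0 = (\<Sum>v\<in>unitv ` X. cscale (u v) v) x" using u by simp
    also have "\<dots> = (\<Sum>y\<in>X. cscale (u (unitv y)) (unitv y) x)"
      unfolding fun_sum_apply by (subst sum.reindex) (auto intro: inj_on_subset[OF unitv_inj])
    also have "\<dots> = (\<Sum>y\<in>X. if y = x then u (unitv x) else 0)"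
      by (intro sum.cong) (auto simp: cscale_def unitv_def)
    also have "\<dots> = u (unitv x)" using x assms by (simp add: sum.delta)
    finally show False using x by simp
  qed
qed

lemma dim_Zs:
  assumes "finite X"
  shows "vector_space.dim (cscale :: 'k::field \<Rightarrow> ('b \<Rightarrow> 'k) \<Rightarrow> ('b \<Rightarrow> 'k)) (Zs X) = card X"
proof -
  interpret vector_space "cscale :: 'k::field \<Rightarrow> ('b \<Rightarrow> 'k) \<Rightarrow> ('b \<Rightarrow> 'k)" by (rule vs_cscale)
  have "dim (Zs X :: ('b \<Rightarrow> 'k) set) = dim (span (unitv ` X) :: ('b \<Rightarrow> 'k) set)"
    using Zs_span[OF assms, where 'k='k] by (simp del: dim_span)
  also have "\<dots> = card (unitv ` X :: ('b \<Rightarrow> 'k) set)"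
    by (rule dim_span_eq_card_independent) (rule unitv_indep[OF assms])
  also have "\<dots> = card X" by (rule card_image) (rule inj_on_subset[OF unitv_inj], simp)
  finally show ?thesis .
qed


lemma frob_zero_iff: "0 < p \<Longrightarrow> frob p (x::'k::field) = 0 \<longleftrightarrow> x = 0"
  by (auto simp: frob_def)

lemma frob_inv_zero: "0 < p \<Longrightarrow> frob_inv p (0::'k::field) = 0"
proof -
  assume p: "0 < p"
  have "frob p (inv (frob p) (0::'k)) = 0"
    by (rule f_inv_into_f[of 0 "frob p" UNIV]) (use p in \<open>auto simp: frob_def image_iff intro!: exI[of _ 0]\<close>)
  then show ?thesis using p by (simp add: frob_inv_def frob_zero_iff)
qed

lemma frob_surj:
  assumes p: "0 < p" and ac: "\<forall>q::'k::field poly. degree q > 0 \<longrightarrow> (\<exists>x. poly q x = 0)"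
  shows "surj (frob p :: 'k \<Rightarrow> 'k)"
proof -
  { fix x :: 'k
    have "degree (monom 1 p + [:-x:]) = p"
      using p by (subst degree_add_eq_left) (auto simp: degree_monom_eq)
    then obtain y where "poly (monom 1 p + [:-x:]) y = 0" using ac p by metis
    then have "frob p y = x" by (simp add: poly_monom frob_def)
    then have "x \<in> range (frob p)" by blast }
  then show ?thesis by blast
qed

lemma frob_inv_zero_iff:
  assumes "0 < p" "surj (frob p :: 'k::field \<Rightarrow> 'k)"
  shows "frob_inv p (x::'k) = 0 \<longleftrightarrow> x = 0"
proof
  assume "frob_inv p x = 0"
  moreover have "frob p (frob_inv p x) = x" using assms(2) by (simp add: frob_inv_def surj_f_inv_f)
  ultimately show "x = 0" using assms by (simp add: frob_def zero_power)
qed (simp add: frob_inv_zero assms)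

definition Jset :: "nat \<Rightarrow> ('e \<Rightarrow> nat) \<Rightarrow> ('e \<Rightarrow> nat \<Rightarrow> nat) \<Rightarrow> 'e \<Rightarrow> ('e \<times> nat) set" where
  "Jset d f w t = {t} \<times> {j \<in> {1..d}. w t j \<le> f t}"

lemma P_space_eq:
  fixes w :: "'e::finite \<Rightarrow> nat \<Rightarrow> nat"
  assumes p: "0 < p" and perm: "w t permutes {1..d}"
  shows "(P_space p d fr f w t :: ('e \<times> nat \<Rightarrow> 'k::field) set) = Zs (Jset d f w t)"
proof (intro set_eqI iffI)
  fix v :: "'e \<times> nat \<Rightarrow> 'k"
  assume v: "v \<in> Zs (Jset d f w t)"
  have "F_map p d fr f w v = (\<lambda>_. 0)"
    unfolding F_map_def semilin_ext_def
  proof (intro ext sum.neutral ballI)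
    fix b a assume a: "a \<in> {a \<in> basis_idx d. F_basis fr f w a = Some b}"
    then have "a \<notin> Jset d f w t"
      by (auto simp: F_basis_def Jset_def Let_def split: if_splits)
    then have "v a = 0" using v unfolding Zs_def by blast
    then show "frob p (v a) = 0" using p by (simp add: frob_def)
  qed
  moreover have "\<forall>a. a \<notin> {t} \<times> {1..d} \<longrightarrow> v a = 0"
    using v by (auto simp: Zs_def Jset_def)
  ultimately show "v \<in> P_space p d fr f w t" by (simp add: P_space_def)
next
  fix v :: "'e \<times> nat \<Rightarrow> 'k"
  assume v: "v \<in> P_space p d fr f w t"
  have supp0: "\<forall>a. a \<notin> {t} \<times> {1..d} \<longrightarrow> v a = 0" and F0: "F_map p d fr f w v = (\<lambda>_. 0)"
    using v unfolding P_space_def by blast+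
  note supp = supp0[rule_format]
  have inj: "inj_on (w t) {1..d}" using permutes_inj_on[OF perm] .
  show "v \<in> Zs (Jset d f w t)"
    unfolding Zs_def
  proof (intro CollectI allI impI)
    fix x assume x: "x \<notin> Jset d f w t"
    show "v x = 0"
    proof (cases "x \<in> {t} \<times> {1..d}")
      case False then show ?thesis by (rule supp)
    next
      case True
      then obtain j where xj: "x = (t, j)" "j \<in> {1..d}" by auto
      with x have gt: "f t < w t j" by (auto simp: Jset_def)
      define b where "b = (fr t, w t j - f t)"
      define S where "S = {a \<in> basis_idx d. F_basis fr f w a = Some b}"
      have xS: "x \<in> S" using xj gt by (auto simp: S_def b_def basis_idx_def F_basis_def)
      have fin: "finite S" unfolding S_def basis_idx_def by auto
      have "0 = F_map p d fr f w v b" using F0 by simp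
      also have "\<dots> = (\<Sum>a\<in>S. frob p (v a))" by (simp add: F_map_def semilin_ext_def S_def)
      also have "\<dots> = frob p (v x) + (\<Sum>a\<in>S - {x}. frob p (v a))"
        using fin xS by (simp add: sum.remove)
      also have "(\<Sum>a\<in>S - {x}. frob p (v a)) = 0"
      proof (intro sum.neutral ballI)
        fix a assume a: "a \<in> S - {x}"
        show "frob p (v a) = 0"
        proof (cases "a \<in> {t} \<times> {1..d}")
          case False then show ?thesis using supp p by (simp add: frob_def)
        next
          case True
          then obtain j' where aj: "a = (t, j')" "j' \<in> {1..d}" by auto
          with a have "f t < w t j'" "w t j' - f t = w t j - f t"
            by (auto simp: S_def F_basis_def b_def split: if_splits)
          then have "w t j' = w t j" using gt by linarith
          then have "j' = j" using inj aj xj by (auto dest: inj_onD)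
          then show ?thesis using a aj xj by simp
        qed
      qed
      finally show ?thesis using p by (simp add: frob_zero_iff)
    qed
  qed
qed

lemma Jset_fin: "finite (Jset d f w (t::'e::finite))"
  unfolding Jset_def by auto

lemma Jset_basis: "Jset d f w t \<subseteq> basis_idx d"
  unfolding Jset_def basis_idx_def by auto

lemma P_tensor_eq:
  fixes w :: "'e::finite \<Rightarrow> nat \<Rightarrow> nat"
  assumes p: "0 < p" and perm1: "w t1 permutes {1..d}" and perm2: "w t2 permutes {1..d}"
  shows "(P_tensor p d fr f w t1 t2 :: (('e \<times> nat) \<times> ('e \<times> nat) \<Rightarrow> 'k::field) set)
     = Zs (Jset d f w t1 \<times> Jset d f w t2)"
proof -
  interpret vector_space "cscale :: 'k::field \<Rightarrow> (('e \<times> nat) \<times> ('e \<times> nat) \<Rightarrow> 'k) \<Rightarrow> _" by (rule vs_cscale)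
  define S1 where "S1 = Jset d f w t1"
  define S2 where "S2 = Jset d f w t2"
  define G where "G = {tens u v | (u :: 'e \<times> nat \<Rightarrow> 'k) v. u \<in> Zs S1 \<and> v \<in> Zs S2}"
  have PT: "(P_tensor p d fr f w t1 t2 :: (('e \<times> nat) \<times> ('e \<times> nat) \<Rightarrow> 'k) set) = span G"
    unfolding P_tensor_def G_def S1_def S2_def P_space_eq[where w=w and t=t1 and d=d and p=p, OF p perm1] P_space_eq[where w=w and t=t2 and d=d and p=p, OF p perm2] ..
  have fin: "finite (S1 \<times> S2)" unfolding S1_def S2_def using Jset_fin by blast
  have "span G = Zs (S1 \<times> S2)"
  proof
    show "span G \<subseteq> Zs (S1 \<times> S2)"
    proof (rule span_minimal[OF _ Zs_subspace])
      show "G \<subseteq> Zs (S1 \<times> S2)"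
      proof
        fix x assume "x \<in> G"
        then obtain u v where x: "x = tens u v" "u \<in> Zs S1" "v \<in> Zs S2" unfolding G_def by blast
        show "x \<in> Zs (S1 \<times> S2)"
          unfolding Zs_def
        proof (intro CollectI allI impI)
          fix y assume "y \<notin> S1 \<times> S2"
          then obtain a b where y: "y = (a, b)" "a \<notin> S1 \<or> b \<notin> S2" by (cases y) auto
          then have "u a = 0 \<or> v b = 0" using x unfolding Zs_def by blast
          then show "x y = 0" using x y by (auto simp: tens_def)
        qed
      qed
    qed
    have "Zs (S1 \<times> S2) = span (unitv ` (S1 \<times> S2))" using Zs_span[OF fin, where 'k='k] by simp
    also have "\<dots> \<subseteq> span G"
    proof (rule span_mono, rule)
      fix x :: "('e \<times> nat) \<times> ('e \<times> nat) \<Rightarrow> 'k" assume "x \<in> unitv ` (S1 \<times> S2)"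
      then obtain a b where ab: "a \<in> S1" "b \<in> S2" "x = unitv (a, b)" by auto
      have "x = tens (unitv a) (unitv b)" using ab by (auto simp: tens_def unitv_def)
      moreover have "(unitv a :: _ \<Rightarrow> 'k) \<in> Zs S1" "(unitv b :: _ \<Rightarrow> 'k) \<in> Zs S2"
        using ab by (auto simp: Zs_def unitv_def)
      ultimately show "x \<in> G" unfolding G_def by blast
    qed
    finally show "Zs (S1 \<times> S2) \<subseteq> span G" .
  qed
  then show ?thesis using PT S1_def S2_def by simp
qed

lemma V_Some:
  assumes fr: "bij fr" and perm: "\<forall>t. w t permutes {1..d}" and fd: "\<forall>t. f t \<le> d"
    and V: "V_basis d fr f w (t, j) = Some b" and jd: "j \<le> d"
  shows "t = fr (fst b) \<and> j = d - f (fst b) + w (fst b) (snd b)"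
proof -
  define s where "s = inv fr t"
  have nj: "\<not> j \<le> d - f s" and b: "b = (s, THE n. n \<in> {1..d} \<and> j = d - f s + w s n)"
    using V by (auto simp: V_basis_def s_def Let_def split: if_splits)
  have ts: "t = fr s" unfolding s_def using fr by (simp add: bij_is_surj surj_f_inv_f)
  have "\<exists>!n. n \<in> {1..d} \<and> j = d - f s + w s n"
  proof -
    have jk: "j - (d - f s) \<in> {1..d}" using nj fd[rule_format, of s] jd by auto
    then obtain n where n: "n \<in> {1..d}" "w s n = j - (d - f s)"
      using permutes_image[OF perm[rule_format, of s]] by (metis imageE)
    show ?thesis
    proof (rule ex1I[of _ n])
      show "n \<in> {1..d} \<and> j = d - f s + w s n" using n nj by auto
      fix m assume "m \<in> {1..d} \<and> j = d - f s + w s m"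
      then have "m \<in> {1..d}" "w s m = w s n" using n by auto
      then show "m = n" using permutes_inj[OF perm[rule_format, of s]] n by (metis injD)
    qed
  qed
  from theI'[OF this] show ?thesis using b ts by simp
qed

definition Dset :: "nat \<Rightarrow> ('e \<Rightarrow> 'e) \<Rightarrow> ('e \<Rightarrow> nat) \<Rightarrow> ('e \<Rightarrow> nat \<Rightarrow> nat) \<Rightarrow> ('e \<times> nat) set" where
  "Dset d fr f w = {a. V_basis d fr f w a \<noteq> None}"

lemma V_inj:
  assumes fr: "bij fr" and perm: "\<forall>t. w t permutes {1..d}" and fd: "\<forall>t. f t \<le> d"
    and a: "a \<in> basis_idx d" and a': "a' \<in> basis_idx d"
    and V: "V_basis d fr f w a = Some b" and V': "V_basis d fr f w a' = Some b"
  shows "a = a'"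
proof -
  obtain t j where tj: "a = (t, j)" "j \<le> d" using a by (cases a) (auto simp: basis_idx_def)
  obtain t' j' where tj': "a' = (t', j')" "j' \<le> d" using a' by (cases a') (auto simp: basis_idx_def)
  show ?thesis using V_Some[OF fr perm fd V[unfolded tj(1)] tj(2)] V_Some[OF fr perm fd V'[unfolded tj'(1)] tj'(2)] tj tj'
    by simp
qed

lemma ker_eq:
  fixes w :: "'e::finite \<Rightarrow> nat \<Rightarrow> nat"
  assumes p: "0 < p" and sj: "surj (frob p :: 'k::field \<Rightarrow> 'k)" and fr: "bij fr"
    and perm: "\<forall>t. w t permutes {1..d}" and fd: "\<forall>t. f t \<le> d"
    and S1: "S1 \<subseteq> basis_idx d" and S2: "S2 \<subseteq> basis_idx d"
  shows "{t \<in> (Zs (S1 \<times> S2) :: (('e \<times> nat) \<times> ('e \<times> nat) \<Rightarrow> 'k) set). VV_map p d fr f w t = (\<lambda>_. 0)}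
     = Zs (S1 \<times> S2 - Dset d fr f w \<times> Dset d fr f w)"
proof (intro set_eqI iffI)
  fix t :: "('e \<times> nat) \<times> ('e \<times> nat) \<Rightarrow> 'k"
  assume t: "t \<in> Zs (S1 \<times> S2 - Dset d fr f w \<times> Dset d fr f w)"
  have "t \<in> Zs (S1 \<times> S2)" using t unfolding Zs_def by blast
  moreover have "VV_map p d fr f w t = (\<lambda>_. 0)"
    unfolding VV_map_def
  proof (intro ext)
    fix bb :: "('e \<times> nat) \<times> ('e \<times> nat)"
    obtain b1 b2 where bb: "bb = (b1, b2)" by (cases bb)
    have "(\<Sum>(a1, a2)\<in>{(a1, a2). a1 \<in> basis_idx d \<and> a2 \<in> basis_idx d \<and>
        V_basis d fr f w a1 = Some b1 \<and> V_basis d fr f w a2 = Some b2}. frob_inv p (t (a1, a2))) = 0"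
    proof (intro sum.neutral ballI)
      fix x assume x: "x \<in> {(a1, a2). a1 \<in> basis_idx d \<and> a2 \<in> basis_idx d \<and>
        V_basis d fr f w a1 = Some b1 \<and> V_basis d fr f w a2 = Some b2}"
      then obtain a1 a2 where x12: "x = (a1, a2)" "a1 \<in> Dset d fr f w" "a2 \<in> Dset d fr f w"
        by (auto simp: Dset_def)
      then have "t x = 0" using t unfolding Zs_def by blast
      then show "(case x of (a1, a2) \<Rightarrow> frob_inv p (t (a1, a2))) = 0"
        using x12 p by (simp add: frob_inv_zero)
    qed
    then show "(case bb of (b1, b2) \<Rightarrow> \<Sum>(a1, a2)\<in>{(a1, a2). a1 \<in> basis_idx d \<and> a2 \<in> basis_idx d \<and>
        V_basis d fr f w a1 = Some b1 \<and> V_basis d fr f w a2 = Some b2}. frob_inv p (t (a1, a2))) = 0"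
      using bb by simp
  qed
  ultimately show "t \<in> {t \<in> Zs (S1 \<times> S2). VV_map p d fr f w t = (\<lambda>_. 0)}" by blast
next
  fix t :: "('e \<times> nat) \<times> ('e \<times> nat) \<Rightarrow> 'k"
  assume t: "t \<in> {t \<in> Zs (S1 \<times> S2). VV_map p d fr f w t = (\<lambda>_. 0)}"
  then have tZ: "t \<in> Zs (S1 \<times> S2)" and V0: "VV_map p d fr f w t = (\<lambda>_. 0)" by auto
  show "t \<in> Zs (S1 \<times> S2 - Dset d fr f w \<times> Dset d fr f w)"
    unfolding Zs_def
  proof (intro CollectI allI impI)
    fix x assume x: "x \<notin> S1 \<times> S2 - Dset d fr f w \<times> Dset d fr f w"
    show "t x = 0"
    proof (cases "x \<in> S1 \<times> S2")
      case False then show ?thesis using tZ unfolding Zs_def by blast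
    next
      case True
      then obtain a1 a2 where a: "x = (a1, a2)" "a1 \<in> S1" "a2 \<in> S2" by auto
      with x have "a1 \<in> Dset d fr f w" "a2 \<in> Dset d fr f w" by auto
      then obtain b1 b2 where b: "V_basis d fr f w a1 = Some b1" "V_basis d fr f w a2 = Some b2"
        by (auto simp: Dset_def)
      have ab: "a1 \<in> basis_idx d" "a2 \<in> basis_idx d" using a S1 S2 by auto
      have P: "{(a1', a2'). a1' \<in> basis_idx d \<and> a2' \<in> basis_idx d \<and>
        V_basis d fr f w a1' = Some b1 \<and> V_basis d fr f w a2' = Some b2} = {(a1, a2)}"
      proof -
        have u: "a1' = a1 \<and> a2' = a2" if "a1' \<in> basis_idx d" "a2' \<in> basis_idx d"
          "V_basis d fr f w a1' = Some b1" "V_basis d fr f w a2' = Some b2" for a1' a2'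
          using V_inj[OF fr perm fd that(1) ab(1) that(3) b(1)] V_inj[OF fr perm fd that(2) ab(2) that(4) b(2)]
          by blast
        show ?thesis using u ab b by blast
      qed
      have "0 = VV_map p d fr f w t (b1, b2)" using V0 by simp
      also have "\<dots> = frob_inv p (t (a1, a2))" unfolding VV_map_def prod.case P by simp
      finally show ?thesis using frob_inv_zero_iff[OF p sj] a by simp
    qed
  qed
qed


lemma card_split:
  "finite X \<Longrightarrow> card {x\<in>X. P x \<and> Q x} + card {x\<in>X. P x \<and> \<not> Q x} = card {x\<in>X. P x}"
proof -
  assume X: "finite X"
  have e: "{x\<in>X. P x} = {x\<in>X. P x \<and> Q x} \<union> {x\<in>X. P x \<and> \<not> Q x}" by blast
  show ?thesis unfolding e by (rule card_Un_disjoint[symmetric]) (use X in auto)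
qed

lemma perm_count:
  assumes "W permutes {1..d}"
  shows "card {j\<in>{1..d}. P (W j)} = card {m\<in>{1..(d::nat)}. P m}"
proof -
  have "W ` {j\<in>{1..d}. P (W j)} = {m\<in>{1..d}. P m}"
  proof -
    have im: "W ` {1..d} = {1..d}" using permutes_image[OF assms] .
    show ?thesis
    proof (intro set_eqI iffI)
      fix m assume "m \<in> W ` {j\<in>{1..d}. P (W j)}"
      then obtain j where "j \<in> {1..d}" "P (W j)" "m = W j" by blast
      then show "m \<in> {m\<in>{1..d}. P m}" using im by blast
    next
      fix m assume m: "m \<in> {m\<in>{1..d}. P m}"
      then have "m \<in> W ` {1..d}" using im by simp
      then obtain j where "j \<in> {1..d}" "m = W j" by blast
      then show "m \<in> W ` {j\<in>{1..d}. P (W j)}" using m by blast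
    qed
  qed
  moreover have "inj_on W {j\<in>{1..d}. P (W j)}"
    using permutes_inj[OF assms] by (rule inj_on_subset) simp
  ultimately show ?thesis using card_image by fastforce
qed

lemma refl_count:
  assumes "W permutes {1..d}"
  shows "card {j\<in>{1..d}. P (check_perm d W j) j} = card {k\<in>{1..(d::nat)}. P (d + 1 - W k) (d + 1 - k)}"
proof -
  define g where "g = (\<lambda>k::nat. d + 1 - k)"
  have Win: "\<And>k. k \<in> {1..d} \<Longrightarrow> W k \<in> {1..d}" using permutes_in_image[OF assms] by blast
  have "g ` {k\<in>{1..d}. P (d + 1 - W k) (d + 1 - k)} = {j\<in>{1..d}. P (check_perm d W j) j}"
  proof (intro set_eqI iffI)
    fix j assume "j \<in> g ` {k\<in>{1..d}. P (d + 1 - W k) (d + 1 - k)}"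
    then obtain k where k: "k \<in> {1..d}" "P (d + 1 - W k) (d + 1 - k)" "j = d + 1 - k" by (auto simp: g_def)
    then have "d + 1 - j = k" by auto
    then show "j \<in> {j\<in>{1..d}. P (check_perm d W j) j}" using k by (auto simp: check_perm_def)
  next
    fix j assume j: "j \<in> {j\<in>{1..d}. P (check_perm d W j) j}"
    then have "d + 1 - j \<in> {1..d}" "d + 1 - (d + 1 - j) = j" by auto
    then show "j \<in> g ` {k\<in>{1..d}. P (d + 1 - W k) (d + 1 - k)}"
      using j unfolding g_def image_iff by (intro bexI[of _ "d + 1 - j"]) (auto simp: check_perm_def)
  qed
  moreover have "inj_on g {k\<in>{1..d}. P (d + 1 - W k) (d + 1 - k)}"
    unfolding g_def inj_on_def by auto
  ultimately show ?thesis using card_image by fastforce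
qed

lemma count_facts:
  fixes W :: "nat \<Rightarrow> nat"
  assumes perm: "W permutes {1..d}" and r: "r \<le> d" and r': "r' \<le> d"
  defines "a \<equiv> card {j\<in>{1..d}. j \<le> d - r' \<and> W j \<le> r}"
    and "A \<equiv> card {j\<in>{1..d}. W j \<le> r \<and> d - r' < j}"
    and "B \<equiv> card {j\<in>{1..d}. check_perm d W j \<le> d - r \<and> d - (d - r') < j}"
    and "b \<equiv> card {j\<in>{1..d}. d - r' + 1 \<le> j \<and> r + 1 \<le> W j}"
  shows "card {j\<in>{1..d}. W j \<le> r} = r" "card {j\<in>{1..d}. check_perm d W j \<le> d - r} = d - r"
    "a + A = r" "a + B = d - r'" "A + b = r'"
proof -
  have Win: "\<And>k. k \<in> {1..d} \<Longrightarrow> W k \<in> {1..d}" using permutes_in_image[OF perm] by blast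
  show c1: "card {j\<in>{1..d}. W j \<le> r} = r"
  proof -
    have "card {j\<in>{1..d}. W j \<le> r} = card {m\<in>{1..d}. m \<le> r}" by (rule perm_count[OF perm])
    also have "{m\<in>{1..d}. m \<le> r} = {1..r}" using r by auto
    finally show ?thesis by simp
  qed
  have c2: "card {j\<in>{1..d}. r + 1 \<le> W j} = d - r"
  proof -
    have "card {j\<in>{1..d}. r + 1 \<le> W j} = card {m\<in>{1..d}. r + 1 \<le> m}" by (rule perm_count[OF perm])
    also have "{m\<in>{1..d}. r + 1 \<le> m} = {r+1..d}" by auto
    finally show ?thesis by simp
  qed
  have Bq: "B = card {k\<in>{1..d}. k \<le> d - r' \<and> r + 1 \<le> W k}"
  proof -
    have "B = card {k\<in>{1..d}. d + 1 - W k \<le> d - r \<and> d - (d - r') < d + 1 - k}"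
      unfolding B_def by (rule refl_count[OF perm, where P="\<lambda>x j. x \<le> d - r \<and> d - (d - r') < j"])
    also have "{k\<in>{1..d}. d + 1 - W k \<le> d - r \<and> d - (d - r') < d + 1 - k} = {k\<in>{1..d}. k \<le> d - r' \<and> r + 1 \<le> W k}"
    proof -
      have "\<And>k. k \<in> {1..d} \<Longrightarrow> (d + 1 - W k \<le> d - r \<and> d - (d - r') < d + 1 - k) = (k \<le> d - r' \<and> r + 1 \<le> W k)"
        using Win r r' by force
      then show ?thesis by blast
    qed
    finally show ?thesis .
  qed
  show "card {j\<in>{1..d}. check_perm d W j \<le> d - r} = d - r"
  proof -
    have "card {j\<in>{1..d}. check_perm d W j \<le> d - r} = card {k\<in>{1..d}. d + 1 - W k \<le> d - r}"
      by (rule refl_count[OF perm, where P="\<lambda>x j. x \<le> d - r"])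
    also have "{k\<in>{1..d}. d + 1 - W k \<le> d - r} = {k\<in>{1..d}. r + 1 \<le> W k}"
    proof -
      have "\<And>k. k \<in> {1..d} \<Longrightarrow> (d + 1 - W k \<le> d - r) = (r + 1 \<le> W k)"
        using Win r by force
      then show ?thesis by blast
    qed
    finally show ?thesis using c2 by simp
  qed
  show "a + A = r"
  proof -
    have "card {j\<in>{1..d}. W j \<le> r \<and> j \<le> d - r'} + card {j\<in>{1..d}. W j \<le> r \<and> \<not> j \<le> d - r'} = r"
      using card_split[of "{1..d}" "\<lambda>j. W j \<le> r" "\<lambda>j. j \<le> d - r'"] c1 by simp
    moreover have "{j\<in>{1..d}. W j \<le> r \<and> j \<le> d - r'} = {j\<in>{1..d}. j \<le> d - r' \<and> W j \<le> r}" by auto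
    moreover have "{j\<in>{1..d}. W j \<le> r \<and> \<not> j \<le> d - r'} = {j\<in>{1..d}. W j \<le> r \<and> d - r' < j}" by auto
    ultimately show ?thesis unfolding a_def A_def by simp
  qed
  show "a + B = d - r'"
  proof -
    have "card {j\<in>{1..d}. j \<le> d - r' \<and> W j \<le> r} + card {j\<in>{1..d}. j \<le> d - r' \<and> \<not> W j \<le> r} = card {j\<in>{1..d}. j \<le> d - r'}"
      using card_split[of "{1..d}" "\<lambda>j. j \<le> d - r'" "\<lambda>j. W j \<le> r"] by simp
    moreover have "{j\<in>{1..d}. j \<le> d - r'} = {1..d - r'}" by auto
    moreover have "{j\<in>{1..d}. j \<le> d - r' \<and> \<not> W j \<le> r} = {j\<in>{1..d}. j \<le> d - r' \<and> r + 1 \<le> W j}" by auto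
    ultimately show ?thesis unfolding a_def Bq by simp
  qed
  show "A + b = r'"
  proof -
    have "card {j\<in>{1..d}. d - r' < j \<and> W j \<le> r} + card {j\<in>{1..d}. d - r' < j \<and> \<not> W j \<le> r} = card {j\<in>{1..d}. d - r' < j}"
      using card_split[of "{1..d}" "\<lambda>j. d - r' < j" "\<lambda>j. W j \<le> r"] by simp
    moreover have "{j\<in>{1..d}. d - r' < j} = {d - r' + 1..d}" by auto
    moreover have "{j\<in>{1..d}. d - r' < j \<and> W j \<le> r} = {j\<in>{1..d}. W j \<le> r \<and> d - r' < j}" by auto
    moreover have "{j\<in>{1..d}. d - r' < j \<and> \<not> W j \<le> r} = {j\<in>{1..d}. d - r' + 1 \<le> j \<and> r + 1 \<le> W j}" by auto
    ultimately show ?thesis unfolding A_def b_def using r' by simp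
  qed
qed

lemma prod_sub_eq:
  fixes x y c :: nat
  assumes "c \<le> x" "c \<le> y"
  shows "(x - c) * (y - c) = x * y \<longleftrightarrow> c = 0"
proof
  assume h: "(x - c) * (y - c) = x * y"
  show "c = 0"
  proof (rule ccontr)
    assume "c \<noteq> 0"
    then have "(x - c) * (y - c) \<le> (x - c) * y" "(x - c) * y < x * y"
      using assms by auto
    with h show False by linarith
  qed
qed simp

lemma arith_key:
  fixes a A B b r r' d :: nat
  assumes "a + A = r" "a + B = d - r'" "A + b = r'" "r \<le> d" "r' \<le> d"
  shows "int (r * (d - r) - A * B) = r_V_ord d r r' \<longleftrightarrow>
    ((r' \<le> r \<longrightarrow> a = r - r') \<and> (r \<le> r' \<longrightarrow> b = r' - r))"
proof -
  have B: "B + b = d - r" using assms by simp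
  have le: "A * B \<le> r * (d - r)" using assms B by (intro mult_le_mono) auto
  have L: "int (r * (d - r) - A * B) = int r * (int d - int r) - int A * int B"
    using le assms by (simp add: of_nat_diff)
  show ?thesis
  proof (cases "r' \<le> r")
    case True
    have o: "r_V_ord d r r' = (int r - int r') * (int d - int r)"
      using True unfolding r_V_ord_def by simp
    have "int (r * (d - r) - A * B) = r_V_ord d r r' \<longleftrightarrow> int A * int B = int r' * (int d - int r)"
      unfolding L o by (simp add: algebra_simps; linarith)
    also have "\<dots> \<longleftrightarrow> (r' - b) * (d - r - b) = r' * (d - r)"
    proof -
      have "A = r' - b" "B = d - r - b" using assms B by auto
      then have e1: "int A * int B = int ((r' - b) * (d - r - b))" by simp
      have e2: "int r' * (int d - int r) = int (r' * (d - r))" using assms by simp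
      show ?thesis by (simp only: e1 e2 of_nat_eq_iff)
    qed
    also have "\<dots> \<longleftrightarrow> b = 0" by (rule prod_sub_eq) (use assms B in auto)
    also have "\<dots> \<longleftrightarrow> ((r' \<le> r \<longrightarrow> a = r - r') \<and> (r \<le> r' \<longrightarrow> b = r' - r))"
      using assms True by auto
    finally show ?thesis .
  next
    case False
    have o: "r_V_ord d r r' = int r * (int r' - int r)"
      using False unfolding r_V_ord_def by simp
    have "int (r * (d - r) - A * B) = r_V_ord d r r' \<longleftrightarrow> int A * int B = int r * (int d - int r')"
      unfolding L o by (simp add: algebra_simps; linarith)
    also have "\<dots> \<longleftrightarrow> (r - a) * (d - r' - a) = r * (d - r')"
    proof -
      have "A = r - a" "B = d - r' - a" using assms B by auto
      then have e1: "int A * int B = int ((r - a) * (d - r' - a))" by simp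
      have e2: "int r * (int d - int r') = int (r * (d - r'))" using assms by simp
      show ?thesis by (simp only: e1 e2 of_nat_eq_iff)
    qed
    also have "\<dots> \<longleftrightarrow> a = 0" by (rule prod_sub_eq) (use assms B in auto)
    also have "\<dots> \<longleftrightarrow> ((r' \<le> r \<longrightarrow> a = r - r') \<and> (r \<le> r' \<longrightarrow> b = r' - r))"
      using assms False by auto
    finally show ?thesis .
  qed
qed

lemma S_inter_D:
  "Jset d f w t \<inter> Dset d fr f w = {t} \<times> {j\<in>{1..d}. w t j \<le> f t \<and> d - f (inv fr t) < j}"
  unfolding Jset_def Dset_def V_basis_def by (auto simp: Let_def)

theorem mainTheorem13:
  fixes p d :: nat
    and bar fr :: "'e::finite \<Rightarrow> 'e"
    and f :: "'e \<Rightarrow> nat"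
    and w :: "'e \<Rightarrow> nat \<Rightarrow> nat"
    and \<tau> :: 'e
    and TYPE_k :: "'k::field itself"
  assumes p_prime: "prime p" and char_p: "of_nat p = (0::'k)"
    and alg_closed: "\<forall>q::'k poly. degree q > 0 \<longrightarrow> (\<exists>x. poly q x = 0)"
    and bar_inv: "\<forall>t. bar (bar t) = t" and bar_nofix: "\<forall>t. bar t \<noteq> t"
    and fr_bij: "bij fr" and fr_bar: "\<forall>t. fr (bar t) = bar (fr t)"
    and sig: "\<forall>t. f t \<le> d \<and> f t + f (bar t) = d"
    and w_shuffle: "\<forall>t. w t \<in> shuffles (f t) d"
    and w_bar: "\<forall>t. w (bar t) = check_perm d (w t)"
  shows "int (r_V TYPE('k) p d fr f w \<tau> (bar \<tau>)) = r_V_ord d (f \<tau>) (f (inv fr \<tau>))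
     \<longleftrightarrow>
       ((f (inv fr \<tau>) \<le> f \<tau> \<longrightarrow>
           card {j \<in> {1..d}. j \<le> d - f (inv fr \<tau>) \<and> w \<tau> j \<le> f \<tau>} = f \<tau> - f (inv fr \<tau>))
      \<and> (f \<tau> \<le> f (inv fr \<tau>) \<longrightarrow>
           card {j \<in> {1..d}. d - f (inv fr \<tau>) + 1 \<le> j \<and> f \<tau> + 1 \<le> w \<tau> j} = f (inv fr \<tau>) - f \<tau>))"
proof -
  have p: "0 < p" using p_prime by (simp add: prime_gt_0_nat)
  have sj: "surj (frob p :: 'k \<Rightarrow> 'k)" by (rule frob_surj[OF p alg_closed])
  have perm: "\<forall>t. w t permutes {1..d}" using w_shuffle by (simp add: shuffles_def)
  have fd: "\<forall>t. f t \<le> d" using sig by simp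
  define s where "s = inv fr \<tau>"
  define tb where "tb = bar \<tau>"
  define r where "r = f \<tau>"
  define r' where "r' = f s"
  have r: "r \<le> d" and r': "r' \<le> d" using fd by (simp_all add: r_def r'_def)
  have ftb: "f tb = d - r" using sig unfolding tb_def r_def by (metis add_diff_cancel_left')
  have invtb: "inv fr tb = bar s"
  proof -
    have "fr (bar s) = tb" using fr_bar fr_bij unfolding s_def tb_def by (simp add: bij_is_surj surj_f_inv_f)
    then show ?thesis using fr_bij by (metis bij_is_inj inv_f_f)
  qed
  have fitb: "f (inv fr tb) = d - r'"
    using sig invtb unfolding r'_def by (metis add_diff_cancel_left')
  have wtb: "w tb = check_perm d (w \<tau>)" using w_bar tb_def by simp
  define S1 where "S1 = Jset d f w \<tau>"
  define S2 where "S2 = Jset d f w tb"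
  define D where "D = Dset d fr f w"
  have fin1: "finite S1" and fin2: "finite S2" unfolding S1_def S2_def by (rule Jset_fin)+
  have "r_V TYPE('k) p d fr f w \<tau> tb =
     vector_space.dim (cscale :: 'k \<Rightarrow> _) {t \<in> (Zs (S1 \<times> S2) :: (('e \<times> nat) \<times> ('e \<times> nat) \<Rightarrow> 'k) set). VV_map p d fr f w t = (\<lambda>_. 0)}"
    unfolding r_V_def S1_def S2_def
    using P_tensor_eq[where 'k='k, OF p perm[rule_format, of \<tau>] perm[rule_format, of tb]] by simp
  also have "\<dots> = vector_space.dim (cscale :: 'k \<Rightarrow> _) (Zs (S1 \<times> S2 - D \<times> D) :: (('e \<times> nat) \<times> ('e \<times> nat) \<Rightarrow> 'k) set)"
    unfolding D_def
    by (subst ker_eq[OF p sj fr_bij perm fd]) (auto simp: S1_def S2_def Jset_basis)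
  also have "\<dots> = card (S1 \<times> S2 - D \<times> D)" by (rule dim_Zs) (use fin1 fin2 in auto)
  also have "\<dots> = card (S1 \<times> S2) - card ((S1 \<inter> D) \<times> (S2 \<inter> D))"
  proof -
    have "S1 \<times> S2 \<inter> D \<times> D = (S1 \<inter> D) \<times> (S2 \<inter> D)" by auto
    moreover have "finite ((S1 \<inter> D) \<times> (S2 \<inter> D))" using fin1 fin2 by auto
    ultimately show ?thesis by (simp add: card_Diff_subset_Int)
  qed
  also have "\<dots> = card S1 * card S2 - card (S1 \<inter> D) * card (S2 \<inter> D)"
    by (simp add: card_cartesian_product)
  finally have dimeq: "r_V TYPE('k) p d fr f w \<tau> tb = card S1 * card S2 - card (S1 \<inter> D) * card (S2 \<inter> D)" .
  define a where "a = card {j\<in>{1..d}. j \<le> d - r' \<and> w \<tau> j \<le> r}"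
  define A where "A = card {j\<in>{1..d}. w \<tau> j \<le> r \<and> d - r' < j}"
  define B where "B = card {j\<in>{1..d}. check_perm d (w \<tau>) j \<le> d - r \<and> d - (d - r') < j}"
  define b where "b = card {j\<in>{1..d}. d - r' + 1 \<le> j \<and> r + 1 \<le> w \<tau> j}"
  note cf = count_facts[OF perm[rule_format, of \<tau>] r r']
  have c1: "card S1 = r" unfolding S1_def Jset_def card_cartesian_product_singleton r_def
    using cf(1) r_def by simp
  have c2: "card S2 = d - r" unfolding S2_def Jset_def card_cartesian_product_singleton ftb wtb
    using cf(2) by simp
  have c3: "card (S1 \<inter> D) = A" unfolding S1_def D_def S_inter_D card_cartesian_product_singleton A_def
    s_def[symmetric] r'_def[symmetric] r_def[symmetric] ..
  have c4: "card (S2 \<inter> D) = B" unfolding S2_def D_def S_inter_D card_cartesian_product_singleton B_def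
    fitb ftb wtb ..
  have key: "int (r * (d - r) - A * B) = r_V_ord d r r' \<longleftrightarrow>
    ((r' \<le> r \<longrightarrow> a = r - r') \<and> (r \<le> r' \<longrightarrow> b = r' - r))"
    by (rule arith_key) (use cf r r' in \<open>simp_all add: a_def A_def B_def b_def\<close>)
  show ?thesis
    using key dimeq c1 c2 c3 c4
    unfolding a_def b_def tb_def r_def r'_def s_def by simp
qed

end
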